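(* Let $\delta\ge 3$ and $n\ge 8\delta-7$ be integers. Then $$\rho_{\mathcal D}\big(K_2\vee(K_{n-\delta-1}\cup K_{\delta-1})\big)\ >\ \rho_{\mathcal D}\big(K_\delta\vee(K_{n-2\delta+1}\cup(\delta-1)K_1)\big).$$
   Context: For a connected graph $G$, $\mathcal D(G)$ is its distance matrix (entry $(i,j)$ is the distance between the $i$-th and $j$-th vertices) and $\rho_{\mathcal D}(G)$ its largest eigenvalue. $K_m$ is the complete graph on $m$ vertices, $tK_1$ the edgeless graph on $t$ vertices, $\cup$ disjoint union, and $\vee$ the join. *)

theory Defs
  imports Complex_Main
begin

type_synonym 'a graph = "'a set \<times> ('a \<Rightarrow> 'a \<Rightarrow> bool)"

definition verts :: "'a graph \<Rightarrow> 'a set" where "verts G = fst G"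
definition adj :: "'a graph \<Rightarrow> 'a \<Rightarrow> 'a \<Rightarrow> bool" where "adj G = snd G"

definition complete_graph :: "nat \<Rightarrow> nat graph" where
  "complete_graph m = ({..<m}, \<lambda>i j. i \<noteq> j)"

definition edgeless_graph :: "nat \<Rightarrow> nat graph" where
  "edgeless_graph m = ({..<m}, \<lambda>i j. False)"

definition graph_union :: "'a graph \<Rightarrow> 'b graph \<Rightarrow> ('a + 'b) graph" where
  "graph_union G H = (Inl ` verts G \<union> Inr ` verts H,
     \<lambda>x y. case (x, y) of (Inl a, Inl b) \<Rightarrow> adj G a b
                       | (Inr a, Inr b) \<Rightarrow> adj H a b
                       | _ \<Rightarrow> False)"

definition graph_join :: "'a graph \<Rightarrow> 'b graph \<Rightarrow> ('a + 'b) graph" where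
  "graph_join G H = (Inl ` verts G \<union> Inr ` verts H,
     \<lambda>x y. case (x, y) of (Inl a, Inl b) \<Rightarrow> adj G a b
                       | (Inr a, Inr b) \<Rightarrow> adj H a b
                       | _ \<Rightarrow> True)"

definition has_walk :: "'a graph \<Rightarrow> 'a \<Rightarrow> 'a \<Rightarrow> nat \<Rightarrow> bool" where
  "has_walk G u v k = (\<exists>xs. length xs = Suc k \<and> hd xs = u \<and> last xs = v \<and>
       set xs \<subseteq> verts G \<and> (\<forall>i<k. adj G (xs ! i) (xs ! Suc i)))"

definition graph_dist :: "'a graph \<Rightarrow> 'a \<Rightarrow> 'a \<Rightarrow> nat" where
  "graph_dist G u v = (LEAST k. has_walk G u v k)"

definition dist_eigenvalue :: "'a graph \<Rightarrow> real \<Rightarrow> bool" where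
  "dist_eigenvalue G \<mu> = (\<exists>x :: 'a \<Rightarrow> real. (\<exists>v\<in>verts G. x v \<noteq> 0) \<and>
      (\<forall>u\<in>verts G. (\<Sum>v\<in>verts G. real (graph_dist G u v) * x v) = \<mu> * x u))"

definition dist_spectral_radius :: "'a graph \<Rightarrow> real" where
  "dist_spectral_radius G = Max {\<mu>. dist_eigenvalue G \<mu>}"

end

theory Submission
  imports Defs "HOL-Computational_Algebra.Polynomial"
begin


lemma walk0_iff: "has_walk G u v 0 \<longleftrightarrow> u = v \<and> u \<in> verts G"
proof
  assume "has_walk G u v 0"
  then obtain xs where "length xs = 1" "hd xs = u" "last xs = v" "set xs \<subseteq> verts G"
    unfolding has_walk_def by auto
  then show "u = v \<and> u \<in> verts G"
    by (metis hd_conv_nth last_conv_nth hd_in_set diff_self_eq_0 length_greater_0_conv One_nat_def zero_less_one subsetD)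
next
  assume "u = v \<and> u \<in> verts G"
  then show "has_walk G u v 0" unfolding has_walk_def by (intro exI[of _ "[u]"]) auto
qed

lemma walk1_imp: "has_walk G u v 1 \<Longrightarrow> adj G u v"
proof -
  assume "has_walk G u v 1"
  then obtain xs where xs: "length xs = Suc 1" "hd xs = u" "last xs = v" "\<forall>i<1. adj G (xs!i) (xs!Suc i)"
    unfolding has_walk_def by blast
  have "xs \<noteq> []" using xs by auto
  then have "xs!0 = u" "xs!1 = v" using xs by (simp_all add: hd_conv_nth last_conv_nth)
  with xs show ?thesis by simp
qed

lemma dist_self: "u \<in> verts G \<Longrightarrow> graph_dist G u u = 0"
  unfolding graph_dist_def using walk0_iff by (metis Least_eq_0)

lemma dist_adj: assumes "u \<noteq> v" "u \<in> verts G" "v \<in> verts G" "adj G u v"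
  shows "graph_dist G u v = 1"
proof -
  have w: "has_walk G u v 1" unfolding has_walk_def using assms
    by (intro exI[of _ "[u,v]"]) auto
  have "\<not> has_walk G u v 0" using assms walk0_iff by metis
  then show ?thesis unfolding graph_dist_def
    by (intro Least_equality w) (metis One_nat_def less_one not_less)
qed

lemma dist_two: assumes "u \<noteq> v" "u \<in> verts G" "v \<in> verts G" "\<not> adj G u v"
   "w \<in> verts G" "adj G u w" "adj G w v"
  shows "graph_dist G u v = 2"
proof -
  have w: "has_walk G u v 2" unfolding has_walk_def using assms
  proof (intro exI[of _ "[u,w,v]"] conjI allI impI)
    fix i :: nat assume "i < 2" then have "i = 0 \<or> i = 1" by auto
    then show "adj G ([u, w, v] ! i) ([u, w, v] ! Suc i)" using assms by auto
  qed auto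
  have n0: "\<not> has_walk G u v 0" using assms walk0_iff by metis
  have n1: "\<not> has_walk G u v 1" using assms walk1_imp by metis
  show ?thesis unfolding graph_dist_def
  proof (intro Least_equality w)
    fix y assume h: "has_walk G u v y"
    show "2 \<le> y"
    proof (rule ccontr)
      assume "\<not> 2 \<le> y" then have "y = 0 \<or> y = 1" by auto
      then show False using h n0 n1 by auto
    qed
  qed
qed

lemma verts_join: "verts (graph_join G H) = Inl ` verts G \<union> Inr ` verts H"
  by (simp add: graph_join_def verts_def)
lemma verts_union: "verts (graph_union G H) = Inl ` verts G \<union> Inr ` verts H"
  by (simp add: graph_union_def verts_def)
lemma adj_join:
  "adj (graph_join G H) (Inl a) (Inl b) = adj G a b"
  "adj (graph_join G H) (Inr c) (Inr d) = adj H c d"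
  "adj (graph_join G H) (Inl a) (Inr c) = True"
  "adj (graph_join G H) (Inr c) (Inl a) = True"
  by (simp_all add: graph_join_def adj_def)
lemma adj_union:
  "adj (graph_union G H) (Inl a) (Inl b) = adj G a b"
  "adj (graph_union G H) (Inr c) (Inr d) = adj H c d"
  "adj (graph_union G H) (Inl a) (Inr c) = False"
  "adj (graph_union G H) (Inr c) (Inl a) = False"
  by (simp_all add: graph_union_def adj_def)
lemma verts_complete: "verts (complete_graph m) = {..<m}"
  and adj_complete: "adj (complete_graph m) i j = (i \<noteq> j)"
  and verts_edgeless: "verts (edgeless_graph m) = {..<m}"
  and adj_edgeless: "adj (edgeless_graph m) i j = False"
  by (simp_all add: complete_graph_def edgeless_graph_def verts_def adj_def)

lemma join_dist:
  assumes "0 < m" "u \<in> verts (graph_join (complete_graph m) H)"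
    "v \<in> verts (graph_join (complete_graph m) H)" "u \<noteq> v"
  shows "graph_dist (graph_join (complete_graph m) H) u v =
     (if adj (graph_join (complete_graph m) H) u v then 1 else 2)"
proof (cases "adj (graph_join (complete_graph m) H) u v")
  case True then show ?thesis using assms dist_adj by simp
next
  case False
  then obtain c d where cd: "u = Inr c" "v = Inr d"
    using assms(4) by (cases u; cases v) (auto simp: adj_join adj_complete)
  have "graph_dist (graph_join (complete_graph m) H) u v = 2"
    by (rule dist_two[where w = "Inl 0"]) (use assms False cd in \<open>auto simp: verts_join verts_complete adj_join\<close>)
  then show ?thesis using False by simp
qed


lemma all3: "(\<forall>i<(3::nat). Q i) \<longleftrightarrow> Q 0 \<and> Q 1 \<and> Q 2"
  by (auto simp: numeral_3_eq_3 less_Suc_eq numeral_2_eq_2)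
lemma sum3: "(\<Sum>i<(3::nat). f i) = f 0 + f 1 + f 2"
  by (simp add: numeral_3_eq_3 numeral_2_eq_2)

locale tripart =
  fixes V :: "'a set" and P :: "nat \<Rightarrow> 'a set" and D :: "'a \<Rightarrow> 'a \<Rightarrow> real"
    and e :: "nat \<Rightarrow> nat \<Rightarrow> real"
  assumes V_eq: "V = (\<Union>i<3. P i)"
    and fin: "finite V"
    and disj: "\<And>i j. i < 3 \<Longrightarrow> j < 3 \<Longrightarrow> i \<noteq> j \<Longrightarrow> P i \<inter> P j = {}"
    and nonempty: "\<And>i. i < 3 \<Longrightarrow> P i \<noteq> {}"
    and diag: "\<And>u. u \<in> V \<Longrightarrow> D u u = 0"
    and off: "\<And>i j u v. i < 3 \<Longrightarrow> j < 3 \<Longrightarrow> u \<in> P i \<Longrightarrow> v \<in> P j \<Longrightarrow> u \<noteq> v \<Longrightarrow> D u v = e i j"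
begin

definition eig :: "real \<Rightarrow> bool" where
  "eig \<mu> \<longleftrightarrow> (\<exists>x. (\<exists>v\<in>V. x v \<noteq> 0) \<and> (\<forall>u\<in>V. (\<Sum>v\<in>V. D u v * x v) = \<mu> * x u))"

lemma finP: "i < 3 \<Longrightarrow> finite (P i)"
  using fin V_eq by (metis UN_I finite_subset lessThan_iff subsetI)

lemma PV: "i < 3 \<Longrightarrow> u \<in> P i \<Longrightarrow> u \<in> V"
  using V_eq by auto

lemma sum_split: "(\<Sum>v\<in>V. f v) = (\<Sum>j<3. \<Sum>v\<in>P j. f v)"
  unfolding V_eq by (rule sum.UNION_disjoint) (auto simp: finP dest: disj)

lemma part_sum:
  assumes "i < 3" "j < 3" "u \<in> P i"
  shows "(\<Sum>v\<in>P j. D u v * c) = real (card (P j)) * e i j * c - (if j = i then e i i * c else 0)"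
proof (cases "j = i")
  case True
  have "(\<Sum>v\<in>P j. D u v * c) = D u u * c + (\<Sum>v\<in>P j - {u}. D u v * c)"
    using True assms finP by (simp add: sum.remove)
  also have "\<dots> = (\<Sum>v\<in>P j - {u}. e i j * c)"
  proof -
    have "(\<Sum>v\<in>P j - {u}. D u v * c) = (\<Sum>v\<in>P j - {u}. e i j * c)"
      by (rule sum.cong) (use assms True off[of i j u] in auto)
    then show ?thesis using diag[OF PV[OF assms(1,3)]] by simp
  qed
  also have "\<dots> = real (card (P j) - 1) * e i j * c" by (simp add: assms True)
  also have "\<dots> = real (card (P j)) * e i j * c - e i i * c"
    using assms True finP card_gt_0_iff[of "P j"]
    by (auto simp: of_nat_diff algebra_simps)
  finally show ?thesis using True by simp
next
  case False
  have "(\<Sum>v\<in>P j. D u v * c) = (\<Sum>v\<in>P j. e i j * c)"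
  proof (intro sum.cong refl)
    fix v assume "v \<in> P j"
    then have "u \<noteq> v" using disj[of i j] assms False by auto
    then show "D u v * c = e i j * c" using off[of i j u v] assms \<open>v \<in> P j\<close> by simp
  qed
  then show ?thesis using False by simp
qed

lemma core:
  assumes "i < 3" "u \<in> P i" "\<And>j v. j < 3 \<Longrightarrow> v \<in> P j \<Longrightarrow> x v = y j"
  shows "(\<Sum>v\<in>V. D u v * x v) = (\<Sum>j<3. real (card (P j)) * e i j * y j) - e i i * y i"
proof -
  have "(\<Sum>v\<in>V. D u v * x v) = (\<Sum>j<3. \<Sum>v\<in>P j. D u v * y j)"
    unfolding sum_split using assms(3) by (intro sum.cong refl) auto
  also have "\<dots> = (\<Sum>j<3. real (card (P j)) * e i j * y j - (if j = i then e i i * y i else 0))"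
    using part_sum assms by (intro sum.cong refl) auto
  also have "\<dots> = (\<Sum>j<3. real (card (P j)) * e i j * y j) - e i i * y i"
    using assms(1) by (simp add: sum_subtractf)
  finally show ?thesis .
qed

lemma const_part:
  assumes eq: "\<forall>u\<in>V. (\<Sum>v\<in>V. D u v * x v) = \<mu> * x u"
    and "i < 3" "u \<in> P i" "u' \<in> P i" "\<mu> \<noteq> - e i i"
  shows "x u = x u'"
proof (rule ccontr)
  assume ne: "x u \<noteq> x u'"
  then have uu: "u \<noteq> u'" by auto
  define h where "h v = (D u v - D u' v) * x v" for v
  have "(\<Sum>v\<in>V. h v) = (\<Sum>v\<in>{u,u'}. h v)"
  proof (rule sum.mono_neutral_right)
    show "finite V" by (rule fin)
    show "{u, u'} \<subseteq> V" using assms PV by auto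
    show "\<forall>v\<in>V - {u, u'}. h v = 0"
    proof
      fix v assume v: "v \<in> V - {u, u'}"
      then obtain j where j: "j < 3" "v \<in> P j" using V_eq by auto
      have "D u v = e i j" "D u' v = e i j" using off[of i j] assms j v by auto
      then show "h v = 0" by (simp add: h_def)
    qed
  qed
  also have "\<dots> = h u + h u'" using uu by simp
  also have "\<dots> = - e i i * x u + e i i * x u'"
    using diag PV assms off[of i i u u'] off[of i i u' u] uu by (simp add: h_def)
  finally have s: "(\<Sum>v\<in>V. h v) = - e i i * x u + e i i * x u'" .
  have "(\<Sum>v\<in>V. h v) = (\<Sum>v\<in>V. D u v * x v) - (\<Sum>v\<in>V. D u' v * x v)"
    by (simp add: h_def sum_subtractf left_diff_distrib)
  also have "\<dots> = \<mu> * x u - \<mu> * x u'" using eq assms PV by simp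
  finally have "(\<mu> + e i i) * (x u - x u') = 0" using s by (simp add: algebra_simps)
  then show False using ne assms(5) by (simp add: add_eq_0_iff)
qed

lemma eig_cases:
  assumes "eig \<mu>"
  shows "(\<exists>i<3. \<mu> = - e i i) \<or>
    (\<exists>y. (y 0 \<noteq> 0 \<or> y 1 \<noteq> 0 \<or> y 2 \<noteq> 0) \<and>
       (\<forall>i<3. (\<Sum>j<3. real (card (P j)) * e i j * y j) - e i i * y i = \<mu> * y i))"
proof (cases "\<exists>i<3. \<mu> = - e i i")
  case True then show ?thesis by blast
next
  case False note na = this
  from assms obtain x where x0: "\<exists>v\<in>V. x v \<noteq> 0"
    and eq: "\<forall>u\<in>V. (\<Sum>v\<in>V. D u v * x v) = \<mu> * x u" unfolding eig_def by blast
  define y where "y j = x (SOME v. v \<in> P j)" for j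
  have xy: "x v = y j" if "j < 3" "v \<in> P j" for j v
  proof -
    have "(SOME v. v \<in> P j) \<in> P j" using nonempty[OF that(1)] by (simp add: some_in_eq)
    then show ?thesis unfolding y_def using const_part[OF eq that(1) that(2)] na that(1) by blast
  qed
  have "\<exists>y. (y 0 \<noteq> 0 \<or> y 1 \<noteq> 0 \<or> y 2 \<noteq> 0) \<and>
       (\<forall>i<3. (\<Sum>j<3. real (card (P j)) * e i j * y j) - e i i * y i = \<mu> * y i)"
  proof (intro exI[of _ y] conjI allI impI)
    obtain v where v: "v \<in> V" "x v \<noteq> 0" using x0 by blast
    then obtain j where j: "j < 3" "v \<in> P j" using V_eq by auto
    then have "y j \<noteq> 0" using xy v by metis
    then show "y 0 \<noteq> 0 \<or> y 1 \<noteq> 0 \<or> y 2 \<noteq> 0" using j(1) all3[of "\<lambda>j. y j = 0"] by auto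
  next
    fix i :: nat assume i: "i < 3"
    obtain u where u: "u \<in> P i" using nonempty[OF i] by blast
    have "(\<Sum>j<3. real (card (P j)) * e i j * y j) - e i i * y i = (\<Sum>v\<in>V. D u v * x v)"
      using core[OF i u xy] by simp
    also have "\<dots> = \<mu> * x u" using eq PV[OF i u] by simp
    also have "\<dots> = \<mu> * y i" using xy[OF i u] by simp
    finally show "(\<Sum>j<3. real (card (P j)) * e i j * y j) - e i i * y i = \<mu> * y i" .
  qed
  then show ?thesis by blast
qed

lemma eig_construct:
  assumes "y 0 \<noteq> 0 \<or> y 1 \<noteq> 0 \<or> y 2 \<noteq> 0"
    and "\<forall>i<3. (\<Sum>j<3. real (card (P j)) * e i j * y j) - e i i * y i = \<mu> * y i"
  shows "eig \<mu>"
proof -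
  define x where "x v = (if v \<in> P 0 then y 0 else if v \<in> P 1 then y 1 else y 2)" for v
  have xy: "x v = y j" if "j < 3" "v \<in> P j" for j v
  proof -
    have "j = 0 \<or> j = 1 \<or> j = 2" using that(1) by auto
    then show ?thesis using that disj[of 0 1] disj[of 0 2] disj[of 1 2] unfolding x_def by auto
  qed
  show ?thesis unfolding eig_def
  proof (intro exI conjI ballI)
    have "(0::nat) < 3" "(1::nat) < 3" "(2::nat) < 3" by simp_all
    then obtain j where j: "j < 3" "y j \<noteq> 0" using assms(1) by blast
    obtain v where "v \<in> P j" using nonempty[OF j(1)] by blast
    then show "\<exists>v\<in>V. x v \<noteq> 0" using xy j PV by metis
  next
    fix u assume "u \<in> V"
    then obtain i where i: "i < 3" "u \<in> P i" using V_eq by auto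
    show "(\<Sum>v\<in>V. D u v * x v) = \<mu> * x u"
      using core[of i u x y] xy assms(2) i xy[OF i] by simp
  qed
qed

lemma eig_diff:
  assumes "i < 3" "u \<in> P i" "u' \<in> P i" "u \<noteq> u'"
  shows "eig (- e i i)"
  unfolding eig_def
proof (intro exI conjI ballI)
  define x where "x v = (if v = u then 1 else if v = u' then -1 else (0::real))" for v
  show "\<exists>v\<in>V. x v \<noteq> 0" using PV assms by (intro bexI[of _ u]) (auto simp: x_def)
  fix w assume w: "w \<in> V"
  have "(\<Sum>v\<in>V. D w v * x v) = (\<Sum>v\<in>{u,u'}. D w v * x v)"
    by (rule sum.mono_neutral_right) (use fin PV assms in \<open>auto simp: x_def\<close>)
  also have "\<dots> = D w u - D w u'" using assms by (simp add: x_def)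
  finally have s: "(\<Sum>v\<in>V. D w v * x v) = D w u - D w u'" .
  show "(\<Sum>v\<in>V. D w v * x v) = - e i i * x w"
  proof (cases "w = u \<or> w = u'")
    case True
    then show ?thesis using s diag PV assms off[of i i u u'] off[of i i u' u]
      by (auto simp: x_def)
  next
    case False
    obtain j where j: "j < 3" "w \<in> P j" using w V_eq by auto
    have "D w u = e j i" "D w u' = e j i" using off[of j i] j assms False by auto
    then show ?thesis using s False by (simp add: x_def)
  qed
qed

end


lemma det3_zero:
  fixes m00 m01 m02 m10 m11 m12 m20 m21 m22 y0 y1 y2 :: real
  assumes "m00*y0 + m01*y1 + m02*y2 = 0" "m10*y0 + m11*y1 + m12*y2 = 0"
    "m20*y0 + m21*y1 + m22*y2 = 0" "y0 \<noteq> 0 \<or> y1 \<noteq> 0 \<or> y2 \<noteq> 0"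
  shows "m00*(m11*m22 - m12*m21) - m01*(m10*m22 - m12*m20) + m02*(m10*m21 - m11*m20) = 0"
proof -
  let ?D = "m00*(m11*m22 - m12*m21) - m01*(m10*m22 - m12*m20) + m02*(m10*m21 - m11*m20)"
  have "?D * y0 = 0" using assms(1-3) by algebra
  moreover have "?D * y1 = 0" using assms(1-3) by algebra
  moreover have "?D * y2 = 0" using assms(1-3) by algebra
  ultimately show ?thesis using assms(4) by auto
qed

lemma less3: "i < (3::nat) \<Longrightarrow> i = 0 \<or> i = 1 \<or> i = 2" by auto
lemma UN3: "(\<Union>i<(3::nat). P i) = P 0 \<union> P 1 \<union> P 2"
  by (auto simp: numeral_3_eq_3 numeral_2_eq_2 less_Suc_eq)

definition p1 :: "real \<Rightarrow> real \<Rightarrow> real \<Rightarrow> real" where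
  "p1 N d \<mu> = \<mu>^3 + (3-N)*\<mu>^2 + (N - 3*N*d + 3*d^2)*\<mu> + d^2 - N*d"

definition G1 :: "nat \<Rightarrow> nat \<Rightarrow> (nat + (nat + nat)) graph" where
  "G1 n \<delta> = graph_join (complete_graph 2)
              (graph_union (complete_graph (n - \<delta> - 1)) (complete_graph (\<delta> - 1)))"

definition P1 :: "nat \<Rightarrow> nat \<Rightarrow> nat \<Rightarrow> (nat + (nat + nat)) set" where
  "P1 n \<delta> i = (if i = 0 then Inl ` {..<2} else if i = 1 then Inr ` Inl ` {..<n-\<delta>-1}
     else Inr ` Inr ` {..<\<delta>-1})"

definition e1 :: "nat \<Rightarrow> nat \<Rightarrow> real" where
  "e1 i j = (if (i = 1 \<and> j = 2) \<or> (i = 2 \<and> j = 1) then 2 else 1)"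

lemma G1_verts: "verts (G1 n \<delta>) = P1 n \<delta> 0 \<union> P1 n \<delta> 1 \<union> P1 n \<delta> 2"
  by (auto simp: G1_def P1_def verts_join verts_union verts_complete)

lemma G1_tripart:
  assumes "\<delta> \<ge> 2" "n \<ge> \<delta> + 2"
  shows "tripart (verts (G1 n \<delta>)) (P1 n \<delta>) (\<lambda>u v. real (graph_dist (G1 n \<delta>) u v)) e1"
proof
  show "verts (G1 n \<delta>) = (\<Union>i<3. P1 n \<delta> i)"
    unfolding UN3 G1_verts ..
  show "finite (verts (G1 n \<delta>))"
    by (simp add: G1_def verts_join verts_union verts_complete)
  show "P1 n \<delta> i \<inter> P1 n \<delta> j = {}" if "i < 3" "j < 3" "i \<noteq> j" for i j
    using less3[OF that(1)] less3[OF that(2)] that(3) by (auto simp: P1_def)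
  show "P1 n \<delta> i \<noteq> {}" if "i < 3" for i
    using less3[OF that] assms by (auto simp: P1_def lessThan_empty_iff)
  show "real (graph_dist (G1 n \<delta>) u u) = 0" if "u \<in> verts (G1 n \<delta>)" for u
    using dist_self[OF that] by simp
  show "real (graph_dist (G1 n \<delta>) u v) = e1 i j"
    if "i < 3" "j < 3" "u \<in> P1 n \<delta> i" "v \<in> P1 n \<delta> j" "u \<noteq> v" for i j u v
  proof -
    have uv: "u \<in> verts (G1 n \<delta>)" "v \<in> verts (G1 n \<delta>)"
      using that(3,4) less3[OF that(1)] less3[OF that(2)] unfolding G1_verts by auto
    have "graph_dist (G1 n \<delta>) u v = (if adj (G1 n \<delta>) u v then 1 else 2)"
      using join_dist[of 2 u "graph_union (complete_graph (n - \<delta> - 1)) (complete_graph (\<delta> - 1))" v]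
        uv that(5) unfolding G1_def by simp
    moreover have "adj (G1 n \<delta>) u v \<longleftrightarrow> \<not> ((i=1 \<and> j=2) \<or> (i=2 \<and> j=1))"
      using less3[OF that(1)] less3[OF that(2)] that(3,4,5)
      by (elim disjE) (auto simp: G1_def P1_def adj_join adj_union adj_complete)
    ultimately show ?thesis by (simp add: e1_def)
  qed
qed


lemma card_P1:
  "card (P1 n \<delta> 0) = 2" "card (P1 n \<delta> 1) = n - \<delta> - 1" "card (P1 n \<delta> 2) = \<delta> - 1"
  by (simp_all add: P1_def card_image)

lemma G1_eig_cases:
  assumes "\<delta> \<ge> 2" "n \<ge> \<delta> + 2" "dist_eigenvalue (G1 n \<delta>) \<mu>"
  shows "\<mu> = -1 \<or> p1 (real n) (real \<delta>) \<mu> = 0"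
proof -
  interpret g: tripart "verts (G1 n \<delta>)" "P1 n \<delta>" "\<lambda>u v. real (graph_dist (G1 n \<delta>) u v)" e1
    using G1_tripart[OF assms(1,2)] .
  have "g.eig \<mu>" using assms(3) by (simp add: dist_eigenvalue_def g.eig_def)
  from g.eig_cases[OF this] show ?thesis
  proof
    assume "\<exists>i<3. \<mu> = - e1 i i"
    then show ?thesis using less3 by (auto simp: e1_def)
  next
    assume "\<exists>y. (y 0 \<noteq> 0 \<or> y 1 \<noteq> 0 \<or> y 2 \<noteq> 0) \<and>
       (\<forall>i<3. (\<Sum>j<3. real (card (P1 n \<delta> j)) * e1 i j * y j) - e1 i i * y i = \<mu> * y i)"
    then obtain y where y0: "y 0 \<noteq> 0 \<or> y 1 \<noteq> 0 \<or> y 2 \<noteq> 0"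
      and eqs: "\<forall>i<3. (\<Sum>j<3. real (card (P1 n \<delta> j)) * e1 i j * y j) - e1 i i * y i = \<mu> * y i"
      by blast
    define N where "N = real n"
    define d where "d = real \<delta>"
    have cA: "real (n - \<delta> - 1) = N - d - 1" and cB: "real (\<delta> - 1) = d - 1"
      using assms by (simp_all add: N_def d_def of_nat_diff)
    have E: "2*y 0 + (N-d-1)*y 1 + (d-1)*y 2 - y 0 = \<mu> * y 0"
      "2*y 0 + (N-d-1)*y 1 + 2*(d-1)*y 2 - y 1 = \<mu> * y 1"
      "2*y 0 + 2*(N-d-1)*y 1 + (d-1)*y 2 - y 2 = \<mu> * y 2"
      using eqs unfolding all3 sum3 card_P1 cA cB by (simp_all add: e1_def algebra_simps)
    have "(1-\<mu>)*((N-d-2-\<mu>)*(d-2-\<mu>) - 2*(d-1)*(2*(N-d-1)))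
        - (N-d-1)*(2*(d-2-\<mu>) - 2*(d-1)*2) + (d-1)*(2*(2*(N-d-1)) - (N-d-2-\<mu>)*2) = 0"
      by (rule det3_zero[OF _ _ _ y0]) (use E in \<open>simp_all add: algebra_simps\<close>)
    then have "p1 N d \<mu> = 0" unfolding p1_def by algebra
    then show ?thesis by (simp add: N_def d_def)
  qed
qed

lemma G1_eig_root:
  assumes "\<delta> \<ge> 2" "n \<ge> \<delta> + 2" "\<mu> > 0" "p1 (real n) (real \<delta>) \<mu> = 0"
  shows "dist_eigenvalue (G1 n \<delta>) \<mu>"
proof -
  interpret g: tripart "verts (G1 n \<delta>)" "P1 n \<delta>" "\<lambda>u v. real (graph_dist (G1 n \<delta>) u v)" e1
    using G1_tripart[OF assms(1,2)] .
  define N where "N = real n"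
  define d where "d = real \<delta>"
  have cA: "real (n - \<delta> - 1) = N - d - 1" and cB: "real (\<delta> - 1) = d - 1"
    using assms by (simp_all add: N_def d_def of_nat_diff)
  have Nd: "N \<ge> d + 2" "d \<ge> 2" using assms by (simp_all add: N_def d_def)
  define a where "a = N - d - 1"
  define b where "b = d - 1"
  define y where "y i = (if i = 0 then (\<mu>-a+1)*(\<mu>-b+1) - 4*a*b else if i = 1 then 2*(\<mu>+b+1) else 2*(\<mu>+a+1))" for i :: nat
  have p: "p1 N d \<mu> = 0" using assms(4) by (simp add: N_def d_def)
  have "g.eig \<mu>"
  proof (rule g.eig_construct[of y])
    have "y 2 \<noteq> 0" using assms(3) Nd by (simp add: y_def a_def)
    then show "y 0 \<noteq> 0 \<or> y 1 \<noteq> 0 \<or> y 2 \<noteq> 0" by blast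
    have "2*y 0 + a*y 1 + b*y 2 - y 0 = \<mu> * y 0"
      using p unfolding y_def a_def b_def p1_def by simp algebra
    moreover have "2*y 0 + a*y 1 + 2*b*y 2 - y 1 = \<mu> * y 1"
      unfolding y_def by simp algebra
    moreover have "2*y 0 + 2*a*y 1 + b*y 2 - y 2 = \<mu> * y 2"
      unfolding y_def by simp algebra
    ultimately show "\<forall>i<3. (\<Sum>j<3. real (card (P1 n \<delta> j)) * e1 i j * y j) - e1 i i * y i = \<mu> * y i"
      unfolding all3 sum3 card_P1 cA cB a_def b_def by (simp add: e1_def algebra_simps)
  qed
  then show ?thesis by (simp add: dist_eigenvalue_def g.eig_def)
qed


definition p2 :: "real \<Rightarrow> real \<Rightarrow> real \<Rightarrow> real" where
  "p2 N d \<mu> = \<mu>^3 + (5-N-d)*\<mu>^2 + (-2*N*d + 5*d^2 - 8*d + 8 - N)*\<mu>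
     + (N*d^2 - 2*d^3 + 8*d^2 - 8*d - 3*N*d + 4)"

definition G2 :: "nat \<Rightarrow> nat \<Rightarrow> (nat + (nat + nat)) graph" where
  "G2 n \<delta> = graph_join (complete_graph \<delta>)
              (graph_union (complete_graph (n - 2 * \<delta> + 1)) (edgeless_graph (\<delta> - 1)))"

definition P2 :: "nat \<Rightarrow> nat \<Rightarrow> nat \<Rightarrow> (nat + (nat + nat)) set" where
  "P2 n \<delta> i = (if i = 0 then Inl ` {..<\<delta>} else if i = 1 then Inr ` Inl ` {..<n - 2 * \<delta> + 1}
     else Inr ` Inr ` {..<\<delta>-1})"

definition e2 :: "nat \<Rightarrow> nat \<Rightarrow> real" where
  "e2 i j = (if (i = 1 \<and> j = 2) \<or> (i = 2 \<and> j = 1) \<or> (i = 2 \<and> j = 2) then 2 else 1)"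

lemma G2_verts: "verts (G2 n \<delta>) = P2 n \<delta> 0 \<union> P2 n \<delta> 1 \<union> P2 n \<delta> 2"
  by (auto simp: G2_def P2_def verts_join verts_union verts_complete verts_edgeless)

lemma G2_tripart:
  assumes "\<delta> \<ge> 2" "n \<ge> 2 * \<delta>"
  shows "tripart (verts (G2 n \<delta>)) (P2 n \<delta>) (\<lambda>u v. real (graph_dist (G2 n \<delta>) u v)) e2"
proof
  show "verts (G2 n \<delta>) = (\<Union>i<3. P2 n \<delta> i)"
    unfolding UN3 G2_verts ..
  show "finite (verts (G2 n \<delta>))"
    by (simp add: G2_def verts_join verts_union verts_complete verts_edgeless)
  show "P2 n \<delta> i \<inter> P2 n \<delta> j = {}" if "i < 3" "j < 3" "i \<noteq> j" for i j
    using less3[OF that(1)] less3[OF that(2)] that(3) by (auto simp: P2_def)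
  show "P2 n \<delta> i \<noteq> {}" if "i < 3" for i
    using less3[OF that] assms by (auto simp: P2_def lessThan_empty_iff)
  show "real (graph_dist (G2 n \<delta>) u u) = 0" if "u \<in> verts (G2 n \<delta>)" for u
    using dist_self[OF that] by simp
  show "real (graph_dist (G2 n \<delta>) u v) = e2 i j"
    if "i < 3" "j < 3" "u \<in> P2 n \<delta> i" "v \<in> P2 n \<delta> j" "u \<noteq> v" for i j u v
  proof -
    have uv: "u \<in> verts (G2 n \<delta>)" "v \<in> verts (G2 n \<delta>)"
      using that(3,4) less3[OF that(1)] less3[OF that(2)] unfolding G2_verts by auto
    have "graph_dist (G2 n \<delta>) u v = (if adj (G2 n \<delta>) u v then 1 else 2)"
      using join_dist[of \<delta> u "graph_union (complete_graph (n - 2 * \<delta> + 1)) (edgeless_graph (\<delta> - 1))" v]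
        uv that(5) assms unfolding G2_def by simp
    moreover have "adj (G2 n \<delta>) u v \<longleftrightarrow> \<not> ((i=1 \<and> j=2) \<or> (i=2 \<and> j=1) \<or> (i=2 \<and> j=2))"
      using less3[OF that(1)] less3[OF that(2)] that(3,4,5)
      by (elim disjE) (auto simp: G2_def P2_def adj_join adj_union adj_complete adj_edgeless)
    ultimately show ?thesis by (simp add: e2_def)
  qed
qed

lemma card_P2:
  "card (P2 n \<delta> 0) = \<delta>" "card (P2 n \<delta> 1) = n - 2 * \<delta> + 1" "card (P2 n \<delta> 2) = \<delta> - 1"
  by (simp_all add: P2_def card_image)

lemma G2_eig_cases:
  assumes "\<delta> \<ge> 2" "n \<ge> 2 * \<delta>" "dist_eigenvalue (G2 n \<delta>) \<mu>"
  shows "\<mu> = -1 \<or> \<mu> = -2 \<or> p2 (real n) (real \<delta>) \<mu> = 0"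
proof -
  interpret g: tripart "verts (G2 n \<delta>)" "P2 n \<delta>" "\<lambda>u v. real (graph_dist (G2 n \<delta>) u v)" e2
    using G2_tripart[OF assms(1,2)] .
  have "g.eig \<mu>" using assms(3) by (simp add: dist_eigenvalue_def g.eig_def)
  from g.eig_cases[OF this] show ?thesis
  proof
    assume "\<exists>i<3. \<mu> = - e2 i i"
    then obtain i where "i < 3" "\<mu> = - e2 i i" by blast
    then show ?thesis using less3[of i] by (auto simp: e2_def)
  next
    assume "\<exists>y. (y 0 \<noteq> 0 \<or> y 1 \<noteq> 0 \<or> y 2 \<noteq> 0) \<and>
       (\<forall>i<3. (\<Sum>j<3. real (card (P2 n \<delta> j)) * e2 i j * y j) - e2 i i * y i = \<mu> * y i)"
    then obtain y where y0: "y 0 \<noteq> 0 \<or> y 1 \<noteq> 0 \<or> y 2 \<noteq> 0"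
      and eqs: "\<forall>i<3. (\<Sum>j<3. real (card (P2 n \<delta> j)) * e2 i j * y j) - e2 i i * y i = \<mu> * y i"
      by blast
    define N where "N = real n"
    define d where "d = real \<delta>"
    have cA: "real (n - 2 * \<delta> + 1) = N - 2*d + 1" and cB: "real (\<delta> - 1) = d - 1"
      using assms by (simp_all add: N_def d_def of_nat_diff)
    have E: "d*y 0 + (N-2*d+1)*y 1 + (d-1)*y 2 - y 0 = \<mu> * y 0"
      "d*y 0 + (N-2*d+1)*y 1 + 2*(d-1)*y 2 - y 1 = \<mu> * y 1"
      "d*y 0 + 2*(N-2*d+1)*y 1 + 2*(d-1)*y 2 - 2*y 2 = \<mu> * y 2"
      using eqs unfolding all3 sum3 card_P2 cA cB by (simp_all add: e2_def d_def algebra_simps)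
    have "(d-1-\<mu>)*((N-2*d-\<mu>)*(2*(d-1)-2-\<mu>) - 2*(d-1)*(2*(N-2*d+1)))
        - (N-2*d+1)*(d*(2*(d-1)-2-\<mu>) - 2*(d-1)*d) + (d-1)*(d*(2*(N-2*d+1)) - (N-2*d-\<mu>)*d) = 0"
      by (rule det3_zero[OF _ _ _ y0]) (use E in \<open>simp_all add: algebra_simps\<close>)
    then have "p2 N d \<mu> = 0" unfolding p2_def by algebra
    then show ?thesis by (simp add: N_def d_def)
  qed
qed

lemma G2_eig_neg1:
  assumes "\<delta> \<ge> 2" "n \<ge> 2 * \<delta>"
  shows "dist_eigenvalue (G2 n \<delta>) (-1)"
proof -
  interpret g: tripart "verts (G2 n \<delta>)" "P2 n \<delta>" "\<lambda>u v. real (graph_dist (G2 n \<delta>) u v)" e2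
    using G2_tripart[OF assms(1,2)] .
  have "g.eig (- e2 0 0)"
    by (rule g.eig_diff[of 0 "Inl 0" "Inl 1"]) (use assms in \<open>auto simp: P2_def\<close>)
  then show ?thesis by (simp add: dist_eigenvalue_def g.eig_def e2_def)
qed


lemma poly_cubic: "poly [:c0, c1, c2, 1:] x = x^3 + c2*x^2 + c1*x + (c0::real)"
  by (simp add: algebra_simps power3_eq_cube power2_eq_square)

lemma finite_cubic_roots: "finite {x::real. x^3 + c2*x^2 + c1*x + c0 = 0}"
proof -
  have "[:c0, c1, c2, 1:] \<noteq> 0" by simp
  from poly_roots_finite[OF this] show ?thesis unfolding poly_cubic .
qed

lemma key_arith:
  fixes N d r :: real
  assumes "d \<ge> 3" "N \<ge> 8*d - 7" "r > 0" "p2 N d r = 0"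
  shows "p1 N d r < 0"
proof -
  define g where "g = r^2 - (N+2*d-4)*r - N*d + 2*d^2 - 3*d + 2"
  define \<alpha> where "\<alpha> = 5*d^2 - 7*d + 2"
  define \<beta> where "\<beta> = 2*N*d^2 - 4*d^3 + 9*d^2 - 7*d - 2*N*d + 2"
  have id1: "p2 N d r = (r+d+1)*g + \<alpha>*r + \<beta>"
    unfolding p2_def g_def \<alpha>_def \<beta>_def by algebra
  have id2: "p1 N d r = p2 N d r + (d-2)*g"
    unfolding p1_def p2_def g_def by algebra
  have a: "\<alpha> > 0"
  proof -
    have "\<alpha> = (5*d-2)*(d-1)" unfolding \<alpha>_def by algebra
    also have "\<dots> > 0" using assms(1) by simp
    finally show ?thesis .
  qed
  have b: "\<beta> > 0"
  proof -
    have h: "2*d*(d-1) \<ge> 0" using assms(1) by simp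
    have "2*N*d*(d-1) \<ge> 2*(8*d-7)*d*(d-1)"
      using mult_right_mono[OF assms(2) h] by (simp add: algebra_simps)
    moreover have "\<beta> = 2*N*d*(d-1) - 4*d^3 + 9*d^2 - 7*d + 2" unfolding \<beta>_def by algebra
    moreover have "2*(8*d-7)*d*(d-1) - 4*d^3 + 9*d^2 - 7*d + 2 = d^2*(12*d-21) + 7*d + 2"
      by algebra
    moreover have "d^2*(12*d-21) \<ge> 0" using assms(1) by simp
    ultimately show ?thesis using assms(1) by linarith
  qed
  have "\<alpha>*r + \<beta> > 0" using a b assms(3) by (simp add: add_pos_pos)
  then have "(r+d+1)*g < 0" using id1 assms(4) by linarith
  moreover have "r+d+1 > 0" using assms by simp
  ultimately have "g < 0" by (simp add: mult_less_0_iff)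
  then have "(d-2)*g < 0" using assms(1) by (simp add: mult_pos_neg)
  then show ?thesis using id2 assms(4) by simp
qed

lemma p1_large:
  fixes N d \<mu> :: real
  assumes "1 \<le> d" "d \<le> N" "\<mu> \<ge> 4*N"
  shows "p1 N d \<mu> > 0"
proof -
  have N1: "N \<ge> 1" and m4: "\<mu> \<ge> 4" and mpos: "\<mu> > 0" using assms by linarith+
  define K where "K = N*N*\<mu>"
  have Kpos: "K > 0" using N1 mpos by (simp add: K_def)
  have s1: "\<mu>^2*(\<mu>-N) \<ge> \<mu>^2*(3*N)" using assms by (intro mult_left_mono) auto
  have s2: "\<mu>*(3*N) \<ge> (4*N)*(3*N)" using assms N1 by (intro mult_right_mono) auto
  have s3: "\<mu>*(\<mu>*(3*N)) \<ge> \<mu>*((4*N)*(3*N))" using mpos s2 by (intro mult_left_mono) auto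
  have f1: "\<mu>^2*(\<mu>-N) \<ge> 12*K"
  proof -
    have "\<mu>^2*(3*N) = \<mu>*(\<mu>*(3*N))" by (simp add: power2_eq_square)
    moreover have "\<mu>*((4*N)*(3*N)) = 12*K" by (simp add: K_def algebra_simps)
    ultimately show ?thesis using s1 s3 by linarith
  qed
  have Nd: "N*d \<le> N*N" using assms N1 by (intro mult_left_mono) auto
  have f2: "3*N*d*\<mu> \<le> 3*K"
    using mult_right_mono[OF Nd, of \<mu>] mpos by (simp add: K_def algebra_simps)
  have f3: "N*d \<le> K"
  proof -
    have "N*N*1 \<le> N*N*\<mu>" using m4 by (intro mult_left_mono) auto
    then show ?thesis using Nd by (simp add: K_def)
  qed
  have eq: "p1 N d \<mu> = \<mu>^2*(\<mu>-N) + 3*\<mu>^2 + N*\<mu> + 3*d^2*\<mu> + d^2 - 3*N*d*\<mu> - N*d"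
    unfolding p1_def by algebra
  have nn: "3*\<mu>^2 \<ge> 0" "N*\<mu> \<ge> 0" "3*d^2*\<mu> \<ge> 0" "d^2 \<ge> 0" using mpos N1 by auto
  show ?thesis using eq nn f1 f2 f3 Kpos by linarith
qed


theorem mainTheorem7:
  fixes \<delta> n :: nat
  assumes "\<delta> \<ge> 3" and "n \<ge> 8 * \<delta> - 7"
  shows "dist_spectral_radius
           (graph_join (complete_graph 2)
              (graph_union (complete_graph (n - \<delta> - 1)) (complete_graph (\<delta> - 1))))
       > dist_spectral_radius
           (graph_join (complete_graph \<delta>)
              (graph_union (complete_graph (n - 2 * \<delta> + 1)) (edgeless_graph (\<delta> - 1))))"
proof -
  define N where "N = real n"
  define d where "d = real \<delta>"
  have d2: "\<delta> \<ge> 2" and n1: "n \<ge> \<delta> + 2" and n2: "n \<ge> 2 * \<delta>" using assms by auto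
  have d3: "d \<ge> 3" using assms(1) by (simp add: d_def)
  have N8: "N \<ge> 8*d - 7"
  proof -
    have "real n \<ge> real (8 * \<delta> - 7)" using assms(2) by linarith
    then show ?thesis using assms(1) by (simp add: N_def d_def of_nat_diff)
  qed
  define S1 where "S1 = {\<mu>. dist_eigenvalue (G1 n \<delta>) \<mu>}"
  define S2 where "S2 = {\<mu>. dist_eigenvalue (G2 n \<delta>) \<mu>}"
  have fin1: "finite S1"
  proof (rule finite_subset)
    show "S1 \<subseteq> {-1} \<union> {x. x^3 + (3-N)*x^2 + (N - 3*N*d + 3*d^2)*x + (d^2 - N*d) = 0}"
      using G1_eig_cases[OF d2 n1] by (auto simp: S1_def p1_def N_def d_def algebra_simps)
    show "finite ({-1} \<union> {x. x^3 + (3-N)*x^2 + (N - 3*N*d + 3*d^2)*x + (d^2 - N*d) = 0})"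
      using finite_cubic_roots by blast
  qed
  have fin2: "finite S2"
  proof (rule finite_subset)
    show "S2 \<subseteq> {-1, -2} \<union> {x. x^3 + (5-N-d)*x^2 + (-2*N*d + 5*d^2 - 8*d + 8 - N)*x
        + (N*d^2 - 2*d^3 + 8*d^2 - 8*d - 3*N*d + 4) = 0}"
      using G2_eig_cases[OF d2 n2] by (auto simp: S2_def p2_def N_def d_def)
    show "finite ({-1, -2} \<union> {x. x^3 + (5-N-d)*x^2 + (-2*N*d + 5*d^2 - 8*d + 8 - N)*x
        + (N*d^2 - 2*d^3 + 8*d^2 - 8*d - 3*N*d + 4) = 0})"
      using finite_cubic_roots by blast
  qed
  have ne2: "-1 \<in> S2" using G2_eig_neg1[OF d2 n2] by (simp add: S2_def)
  define r where "r = Max S2"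
  have rS2: "r \<in> S2" using Max_in[OF fin2] ne2 by (auto simp: r_def)
  define t where "t = max r 0"
  have pt: "p1 N d t < 0"
  proof (cases "r > 0")
    case True
    have "r = -1 \<or> r = -2 \<or> p2 N d r = 0"
      using G2_eig_cases[OF d2 n2] rS2 by (auto simp: S2_def N_def d_def)
    then have "p2 N d r = 0" using True by auto
    then have "p1 N d r < 0" using key_arith[OF d3 N8 True] by blast
    then show ?thesis using True by (simp add: t_def)
  next
    case False
    then have "t = 0" by (simp add: t_def)
    moreover have "d*d < N*d" using d3 N8 by (intro mult_strict_right_mono) auto
    ultimately show ?thesis by (simp add: p1_def power2_eq_square)
  qed
  define b where "b = max t (4*N)"
  have pb: "p1 N d b > 0"
    using p1_large[of d N b] d3 N8 by (simp add: b_def)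
  have cont: "continuous_on {t..b} (\<lambda>x. p1 N d x)"
    unfolding p1_def by (intro continuous_intros)
  have tb: "t \<le> b" by (simp add: b_def)
  obtain \<mu>1 where m1: "\<mu>1 \<ge> t" "\<mu>1 \<le> b" "p1 N d \<mu>1 = 0"
    using IVT'[of "\<lambda>x. p1 N d x" t 0 b, OF _ _ tb cont] pt pb by auto
  have "\<mu>1 \<noteq> t" using m1 pt by auto
  then have gt: "\<mu>1 > t" using m1 by simp
  have "\<mu>1 \<in> S1"
    using G1_eig_root[OF d2 n1, of \<mu>1] gt m1(3) by (simp add: S1_def t_def N_def d_def)
  then have "Max S1 \<ge> \<mu>1" using fin1 by simp
  moreover have "r \<le> t" by (simp add: t_def)
  ultimately have "Max S1 > Max S2" using gt by (simp add: r_def)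
  then show ?thesis unfolding dist_spectral_radius_def S1_def S2_def G1_def G2_def .
qed

end
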